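(* Let $X_0,Y_0$ be $\mathbb Z_+$-valued random variables with $\mathbf P(X_0=k)\ge\mathbf P(Y_0=k)$ for all integers $k\ge1$ and $\mathbf P(Y_0=0)>0$, coupled as in the $XY$-coupling described below, and let $\eta>0$. If $\mathbf E(X_0)<\infty$ and $\mathbf E(X_0-Y_0)\ge\eta\,\mathbf P(Y_0=0)$, then for all real $r\ge0$, all integers $n\ge0$, $k\ge0$ and all integers $\ell\in[0,\frac{r\eta}2]$, $$\mathbf E(X_{n+k+\ell})\ge\frac{m^{k+\ell}\eta}{2}\,\mathbf E\big[N_n^{(0)}\mathbf 1_{\{N_n^{(0)}\ge r\}}\mathbf 1_{\{Y_n=k\}}\big].$$
   Context: Fix an integer $m\ge2$. Reversed $m$-ary tree $\mathbb T$: vertices have generations $|x|\in\{0,1,2,\dots\}$; each vertex $x$ with $|x|\ge1$ has $m$ parents $x^{(1)},\dots,x^{(m)}$ in generation $|x|-1$, and each vertex has a unique child in the next generation. $XY$-coupling: couple $(X_0,Y_0)$ so that $X_0\ge Y_0$ a.s. and $\mathbf P(X_0=Y_0\mid Y_0>0)=1$ (possible under the hypotheses). Let $(X(x),Y(x))$, $|x|=0$, be i.i.d. copies of this pair, and for $|x|\ge1$ set $X(x):=(X(x^{(1)})+\cdots+X(x^{(m)})-1)^+$, $Y(x):=(Y(x^{(1)})+\cdots+Y(x^{(m)})-1)^+$. Then $X(x)\ge Y(x)$ for all $x$, and for $|x|=n$ the variables $X(x)$ (resp. $Y(x)$) have the law of the $n$-th term $X_n$ (resp. $Y_n$) of the recursive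 system $Z_{n+1}\overset{d}=(Z_{n,1}+\cdots+Z_{n,m}-1)^+$ started from $X_0$ (resp. $Y_0$). Open paths: a path leading to $x$ is $(x_0,\dots,x_{|x|}=x)$ with $|x_j|=j$ and $x_{j+1}$ the child of $x_j$; it is open if for every vertex $z$ on it with $|z|\ge1$, $Y(z^{(1)})+\cdots+Y(z^{(m)})\ge1$ (a path with $|x|=0$ is open). $N^{(i)}(x)$ is the number of open paths leading to $x$ with $Y(x_0)=i$. Let $\mathfrak e_n$ be a fixed vertex of generation $n$ (the first in lexicographic order, with $\mathfrak e_{n+1}$ the child of $\mathfrak e_n$), and set $N_n^{(0)}:=N^{(0)}(\mathfrak e_n)$, $Y_n:=Y(\mathfrak e_n)$, and $X_n:=X(\mathfrak e_n)$. *)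

theory Defs
  imports "HOL-Probability.Probability"
begin

text \<open>Model of the reversed m-ary tree: the vertices of generation n are the pairs (n, i),
  i a natural number. The parents of (n+1, i) are (n, m*i + p) for p < m (p = 0 being the
  first parent), and the unique child of (n, i) is (n+1, i div m). The distinguished vertex
  e_n is (n, 0); (n+1, 0) is the child of (n, 0).
  Given generation-0 values Z :: nat => nat, tval m Z n i is the value at vertex (n, i)
  obtained from the recursion Z(x) = (Z(x^1) + ... + Z(x^m) - 1)^+.\<close>

fun tval :: "nat \<Rightarrow> (nat \<Rightarrow> nat) \<Rightarrow> nat \<Rightarrow> nat \<Rightarrow> nat" where
  "tval m Z 0 i = Z i"
| "tval m Z (Suc n) i = (\<Sum>p<m. tval m Z n (m * i + p)) - 1"

text \<open>The path from the generation-0 vertex (0, i0) passes through (j, i0 div m^j).\<close>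

definition path_open :: "nat \<Rightarrow> (nat \<Rightarrow> nat) \<Rightarrow> nat \<Rightarrow> nat \<Rightarrow> bool" where
  "path_open m Y n i0 \<longleftrightarrow>
     (\<forall>j\<in>{1..n}. (\<Sum>p<m. tval m Y (j - 1) (m * (i0 div m ^ j) + p)) \<ge> 1)"

definition Npaths0 :: "nat \<Rightarrow> (nat \<Rightarrow> nat) \<Rightarrow> nat \<Rightarrow> nat \<Rightarrow> nat" where
  "Npaths0 m Y n i =
     card {i0 \<in> {i * m ^ n ..< (i + 1) * m ^ n}. Y i0 = 0 \<and> path_open m Y n i0}"

end

theory Submission
  imports Defs
begin


lemma sum_split_mult:
  fixes h :: "nat \<Rightarrow> 'b::comm_monoid_add"
  shows "(\<Sum>c<m*M. h c) = (\<Sum>p<m. \<Sum>b<M. h (p*M + b))"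
proof -
  have "(\<Sum>c<m*M. h c) = (\<Sum>p<m. sum h {p*M..<p*M+M})"
    by (rule sum.nat_group[symmetric])
  also have "\<dots> = (\<Sum>p<m. \<Sum>b<M. h (p*M + b))"
  proof (rule sum.cong[OF refl])
    fix p
    have "sum h {0 + p*M..<M + p*M} = (\<Sum>b\<in>{0..<M}. h (b + p*M))"
      by (rule sum.shift_bounds_nat_ivl)
    then show "sum h {p*M..<p*M+M} = (\<Sum>b<M. h (p*M + b))"
      by (simp add: add.commute atLeast0LessThan)
  qed
  finally show ?thesis .
qed

lemma sum_minus1_ge:
  fixes f :: "'a \<Rightarrow> nat"
  shows "(\<Sum>x\<in>A. f x) - 1 \<ge> (\<Sum>x\<in>A. f x - 1)"
proof (induction A rule: infinite_finite_induct)
  case (insert x F)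
  then show ?case by (cases "f x") auto
qed auto

lemma tval_cong:
  assumes "\<And>t. i * m ^ n \<le> t \<Longrightarrow> t < (i+1) * m ^ n \<Longrightarrow> Z t = Z' t"
  shows "tval m Z n i = tval m Z' n i"
  using assms
proof (induction n arbitrary: i)
  case 0
  then show ?case by simp
next
  case (Suc n)
  have "tval m Z n (m*i+p) = tval m Z' n (m*i+p)" if p: "p < m" for p
  proof (rule Suc.IH)
    fix t assume t: "(m*i+p) * m^n \<le> t" "t < (m*i+p+1)*m^n"
    have "i * m ^ Suc n \<le> (m*i+p) * m^n" by (simp add: algebra_simps)
    moreover have "(m*i+p+1)*m^n \<le> (i+1) * m ^ Suc n"
    proof -
      have "m*i+p+1 \<le> m*(i+1)" using p by simp
      then have "(m*i+p+1)*m^n \<le> m*(i+1)*m^n" by (rule mult_right_mono) simp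
      then show ?thesis by (simp add: algebra_simps)
    qed
    ultimately have "i * m ^ Suc n \<le> t" "t < (i+1) * m ^ Suc n" using t by linarith+
    then show "Z t = Z' t" using Suc.prems by blast
  qed
  then show ?case by simp
qed

lemma tval_shift:
  "tval m (\<lambda>t. Z (c * m ^ n + t)) n i = tval m Z n (c + i)"
proof (induction n arbitrary: c i)
  case 0
  then show ?case by simp
next
  case (Suc n)
  have "tval m (\<lambda>t. Z (c * m ^ Suc n + t)) n (m*i+p) = tval m Z n (m*(c+i)+p)" for p
  proof -
    have "(\<lambda>t. Z (c * m ^ Suc n + t)) = (\<lambda>t. Z ((c*m) * m ^ n + t))"
      by (simp add: algebra_simps)
    then show ?thesis using Suc.IH[of "c*m" "m*i+p"] by (simp add: algebra_simps)
  qed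
  then show ?case by simp
qed

lemma tval_ancestors:
  "tval m Z (n+j) i \<ge> (\<Sum>b<m^j. tval m Z n (i*m^j + b) - j)"
proof (induction j arbitrary: i)
  case 0
  then show ?case by simp
next
  case (Suc j)
  let ?d = "\<lambda>p b. tval m Z n ((m*i+p)*m^j + b) - j"
  have "(\<Sum>c<m*m^j. tval m Z n (i*m^Suc j + c) - Suc j) = (\<Sum>p<m. \<Sum>b<m^j. ?d p b - 1)"
    by (subst sum_split_mult) (simp add: algebra_simps)
  also have "\<dots> \<le> (\<Sum>p<m. (\<Sum>b<m^j. ?d p b) - 1)"
    by (intro sum_mono sum_minus1_ge)
  also have "\<dots> \<le> (\<Sum>p<m. tval m Z (n+j) (m*i+p) - 1)"
    by (intro sum_mono diff_le_mono Suc.IH)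
  also have "\<dots> \<le> (\<Sum>p<m. tval m Z (n+j) (m*i+p)) - 1" by (rule sum_minus1_ge)
  also have "\<dots> = tval m Z (n + Suc j) i" by simp
  finally show ?case by simp
qed

lemma path_open_Suc:
  "path_open m Y (Suc n) i0 \<longleftrightarrow> path_open m Y n i0 \<and>
     (\<Sum>p<m. tval m Y n (m * (i0 div m ^ Suc n) + p)) \<ge> 1"
proof -
  have "{1..Suc n} = insert (Suc n) {1..n}" by auto
  then show ?thesis unfolding path_open_def by auto
qed

definition Sfun :: "nat \<Rightarrow> (nat \<Rightarrow> nat) \<Rightarrow> (nat \<Rightarrow> nat) \<Rightarrow> nat \<Rightarrow> nat \<Rightarrow> nat" where
  "Sfun m X Y n i = (\<Sum>c<m^n. if Y (i*m^n+c) = 0 \<and> path_open m Y n (i*m^n+c) then X (i*m^n+c) else 0)"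

lemma tval_XY:
  assumes ge: "\<And>t. X t \<ge> Y t" and m: "m > 0"
  shows "tval m X n i \<ge> tval m Y n i + Sfun m X Y n i"
proof (induction n arbitrary: i)
  case 0
  have "Sfun m X Y 0 i = (if Y i = 0 then X i else 0)" by (simp add: Sfun_def path_open_def)
  then show ?case using ge[of i] by auto
next
  case (Suc n)
  let ?s = "(\<Sum>p<m. tval m Y n (m * i + p))"
  have key: "Sfun m X Y (Suc n) i = (if ?s \<ge> 1 then (\<Sum>p<m. Sfun m X Y n (m*i+p)) else 0)"
  proof -
    have dv: "(i * m ^ Suc n + c) div m ^ Suc n = i" if "c < m ^ Suc n" for c
      using that m by simp
    have "Sfun m X Y (Suc n) i = (\<Sum>c<m^Suc n. if ?s \<ge> 1 then (if Y (i*m^Suc n+c) = 0 \<and> path_open m Y n (i*m^Suc n+c) then X (i*m^Suc n+c) else 0) else 0)"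
      unfolding Sfun_def by (intro sum.cong refl) (auto simp: path_open_Suc dv)
    also have "\<dots> = (if ?s \<ge> 1 then (\<Sum>c<m*m^n. (if Y (i*m^Suc n+c) = 0 \<and> path_open m Y n (i*m^Suc n+c) then X (i*m^Suc n+c) else 0)) else 0)"
      by simp
    also have "\<dots> = (if ?s \<ge> 1 then (\<Sum>p<m. Sfun m X Y n (m*i+p)) else 0)"
    proof -
      have ar: "\<And>p b. i*m^Suc n + (p*m^n+b) = (m*i+p)*m^n + b" by (simp add: algebra_simps)
      show ?thesis unfolding Sfun_def by (subst sum_split_mult) (simp only: ar)
    qed
    finally show ?thesis .
  qed
  show ?case
  proof (cases "?s \<ge> 1")
    case True
    have "tval m Y (Suc n) i + Sfun m X Y (Suc n) i = (?s - 1) + (\<Sum>p<m. Sfun m X Y n (m*i+p))"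
      using key True by simp
    also have "\<dots> = (\<Sum>p<m. tval m Y n (m * i + p) + Sfun m X Y n (m*i+p)) - 1"
      using True by (simp add: sum.distrib)
    also have "\<dots> \<le> (\<Sum>p<m. tval m X n (m * i + p)) - 1"
      by (intro diff_le_mono sum_mono Suc.IH)
    finally show ?thesis by simp
  next
    case False
    then show ?thesis using key by simp
  qed
qed

lemma path_open_cong:
  assumes m: "m > 0" and eq: "\<And>t. t < m^n \<Longrightarrow> Y t = Y' t" and i0: "i0 < m^n"
  shows "path_open m Y n i0 = path_open m Y' n i0"
  unfolding path_open_def
proof (intro ball_cong refl arg_cong2[where f="(\<le>)"] sum.cong)
  fix j p assume j: "j \<in> {1..n}" and p: "p \<in> {..<m}"
  let ?q = "i0 div m ^ j"
  have mj: "m ^ n = m ^ (n - j) * m ^ j" using j by (simp flip: power_add)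
  have q: "?q < m ^ (n - j)" using i0 m mj by (simp add: less_mult_imp_div_less)
  have mj1: "m ^ j = m * m ^ (j - 1)" using j by (cases j) auto
  show "tval m Y (j - 1) (m * ?q + p) = tval m Y' (j - 1) (m * ?q + p)"
  proof (rule tval_cong)
    fix t assume "t < (m * ?q + p + 1) * m ^ (j - 1)"
    moreover have "(m * ?q + p + 1) * m ^ (j - 1) \<le> (?q + 1) * m ^ j"
    proof -
      have "m * ?q + p + 1 \<le> m * (?q + 1)" using p by simp
      then have "(m * ?q + p + 1) * m ^ (j - 1) \<le> m * (?q + 1) * m ^ (j - 1)" by (rule mult_right_mono) simp
      then show ?thesis using mj1 by (simp add: algebra_simps)
    qed
    moreover have "(?q + 1) * m ^ j \<le> m ^ n"
      using q mj by (metis Suc_eq_plus1 Suc_leI mult_le_mono1)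
    ultimately show "Y t = Y' t" using eq by simp
  qed
qed

lemma Npaths0_sum:
  "Npaths0 m Y n 0 = (\<Sum>c<m^n. if Y c = 0 \<and> path_open m Y n c then 1 else 0)"
proof -
  have "Npaths0 m Y n 0 = card {c \<in> {..<m^n}. Y c = 0 \<and> path_open m Y n c}"
    unfolding Npaths0_def by (simp add: atLeast0LessThan)
  also have "\<dots> = (\<Sum>c\<in>{c \<in> {..<m^n}. Y c = 0 \<and> path_open m Y n c}. 1)" by simp
  also have "\<dots> = (\<Sum>c<m^n. if Y c = 0 \<and> path_open m Y n c then 1 else 0)"
    by (rule sum.inter_filter) simp
  finally show ?thesis .
qed

lemma Sfun0: "Sfun m X Y n 0 = (\<Sum>c<m^n. if Y c = 0 \<and> path_open m Y n c then X c else 0)"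
  unfolding Sfun_def by (simp cong: if_cong)

lemma Npaths0_cong:
  assumes m: "m > 0" and eq: "\<And>t. t < m^n \<Longrightarrow> Y t = Y' t"
  shows "Npaths0 m Y n 0 = Npaths0 m Y' n 0"
  unfolding Npaths0_sum using path_open_cong[OF m eq] eq by (intro sum.cong) auto

lemma tval0_cong:
  assumes eq: "\<And>t. t < m^n \<Longrightarrow> Y t = Y' t"
  shows "tval m Y n 0 = tval m Y' n 0"
  by (rule tval_cong) (use eq in simp)

lemma Sfun0_cong:
  assumes m: "m > 0" and eqX: "\<And>t. t < m^n \<Longrightarrow> X t = X' t" and eqY: "\<And>t. t < m^n \<Longrightarrow> Y t = Y' t"
  shows "Sfun m X Y n 0 = Sfun m X' Y' n 0"
  unfolding Sfun0 using path_open_cong[OF m eqY] eqX eqY by (intro sum.cong) auto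



lemma measurable_map_list:
  assumes "\<And>t. t \<in> set ts \<Longrightarrow> (\<lambda>\<omega>. f t \<omega>) \<in> measurable M (count_space UNIV)"
  shows "(\<lambda>\<omega>. map (\<lambda>t. f t \<omega>) ts) \<in> measurable M (count_space (UNIV::('b::countable) list set))"
  using assms
proof (induction ts)
  case Nil
  then show ?case by simp
next
  case (Cons t ts)
  have IH: "(\<lambda>\<omega>. map (\<lambda>t. f t \<omega>) ts) \<in> measurable M (count_space UNIV)"
    using Cons by simp
  have h1: "\<And>a::'b. (\<lambda>\<omega>. a # map (\<lambda>t. f t \<omega>) ts) \<in> measurable M (count_space UNIV)"
    using measurable_compose[OF IH, of "\<lambda>l. a # l" "count_space UNIV" for a] by simp
  have h2: "(\<lambda>\<omega>. f t \<omega>) \<in> measurable M (count_space UNIV)" using Cons by simp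
  from measurable_compose_countable[OF h1 h2]
  show ?case by simp
qed

lemma (in prob_space) indep_factor:
  fixes u :: "'b \<Rightarrow> ennreal" and w :: "'b \<Rightarrow> ennreal"
  assumes ind: "indep_var Ma A Mb B" and u: "u \<in> borel_measurable Ma" and w: "w \<in> borel_measurable Mb"
  shows "(\<integral>\<^sup>+\<omega>. u (A \<omega>) * w (B \<omega>) \<partial>M) = (\<integral>\<^sup>+\<omega>. u (A \<omega>) \<partial>M) * (\<integral>\<^sup>+\<omega>. w (B \<omega>) \<partial>M)"
proof -
  have "indep_var borel (u \<circ> A) borel (w \<circ> B)"
    by (rule indep_var_compose[OF ind u w])
  then have iv: "indep_vars (case_bool borel borel) (case_bool (u \<circ> A) (w \<circ> B)) UNIV"
    unfolding indep_var_def .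
  have cb: "case_bool borel borel = (\<lambda>_::bool. borel)" by (rule ext) (simp split: bool.split)
  have iv2: "indep_vars (\<lambda>_. borel) (case_bool (u \<circ> A) (w \<circ> B)) UNIV"
    using iv unfolding cb .
  have "(\<integral>\<^sup>+\<omega>. (\<Prod>i\<in>UNIV. case_bool (u \<circ> A) (w \<circ> B) i \<omega>) \<partial>M) =
        (\<Prod>i\<in>UNIV. \<integral>\<^sup>+\<omega>. case_bool (u \<circ> A) (w \<circ> B) i \<omega> \<partial>M)"
    by (rule indep_vars_nn_integral) (use iv2 in auto)
  then show ?thesis by (simp add: UNIV_bool mult.commute comp_def)
qed

lemma (in prob_space) block_preimage_emeasure:
  fixes Q :: "nat \<Rightarrow> 'a \<Rightarrow> nat \<times> nat"
  assumes meas: "\<And>i. Q i \<in> M \<rightarrow>\<^sub>M count_space UNIV"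
    and indep: "indep_vars (\<lambda>_. count_space UNIV) Q UNIV"
    and ident: "\<And>i. distr M (count_space UNIV) (Q i) = distr M (count_space UNIV) (Q 0)"
  shows "emeasure M ((\<lambda>\<omega>. map (\<lambda>t. fst (Q (b+t) \<omega>)) [0..<N]) -` {L} \<inter> space M) =
     (if length L = N then ennreal (\<Prod>t<N. prob (Q 0 -` {p. fst p = L!t} \<inter> space M)) else 0)"
proof (cases "length L = N")
  case False
  then have "(\<lambda>\<omega>. map (\<lambda>t. fst (Q (b+t) \<omega>)) [0..<N]) -` {L} \<inter> space M = {}" by auto
  then show ?thesis using False by simp
next
  case True
  show ?thesis
  proof (cases "N = 0")
    case True
    with \<open>length L = N\<close> have "(\<lambda>\<omega>. map (\<lambda>t. fst (Q (b+t) \<omega>)) [0..<N]) -` {L} \<inter> space M = space M" by auto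
    then show ?thesis using True \<open>length L = N\<close> by (simp add: emeasure_space_1)
  next
    case False
    define A where "A i = {p::nat\<times>nat. fst p = L!(i-b)}" for i
    have eqset: "(\<lambda>\<omega>. map (\<lambda>t. fst (Q (b+t) \<omega>)) [0..<N]) -` {L} \<inter> space M =
        (\<Inter>i\<in>{b..<b+N}. Q i -` A i \<inter> space M)"
    proof (rule set_eqI)
      fix \<omega>
      have e1: "map (\<lambda>t. fst (Q (b+t) \<omega>)) [0..<N] = L \<longleftrightarrow> (\<forall>t<N. fst (Q (b+t) \<omega>) = L!t)"
        using True by (auto simp: list_eq_iff_nth_eq)
      have e2: "(\<forall>t<N. fst (Q (b+t) \<omega>) = L!t) \<longleftrightarrow> (\<forall>i\<in>{b..<b+N}. Q i \<omega> \<in> A i)"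
      proof
        assume h: "\<forall>t<N. fst (Q (b+t) \<omega>) = L!t"
        show "\<forall>i\<in>{b..<b+N}. Q i \<omega> \<in> A i"
        proof
          fix i assume "i \<in> {b..<b+N}"
          then have "i - b < N" "b + (i - b) = i" by auto
          then show "Q i \<omega> \<in> A i" using h unfolding A_def by force
        qed
      next
        assume h: "\<forall>i\<in>{b..<b+N}. Q i \<omega> \<in> A i"
        show "\<forall>t<N. fst (Q (b+t) \<omega>) = L!t"
        proof (intro allI impI)
          fix t assume "t < N"
          then have "b + t \<in> {b..<b+N}" by simp
          then show "fst (Q (b+t) \<omega>) = L!t" using h unfolding A_def by force
        qed
      qed
      show "\<omega> \<in> (\<lambda>\<omega>. map (\<lambda>t. fst (Q (b+t) \<omega>)) [0..<N]) -` {L} \<inter> space M \<longleftrightarrow>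
            \<omega> \<in> (\<Inter>i\<in>{b..<b+N}. Q i -` A i \<inter> space M)"
        using e1 e2 False by auto
    qed
    have "prob (\<Inter>i\<in>{b..<b+N}. Q i -` A i \<inter> space M) = (\<Prod>i\<in>{b..<b+N}. prob (Q i -` A i \<inter> space M))"
      by (rule indep_varsD[OF indep]) (use False in auto)
    also have "\<dots> = (\<Prod>i\<in>{b..<b+N}. prob (Q 0 -` A i \<inter> space M))"
    proof (rule prod.cong[OF refl])
      fix i
      have "measure (distr M (count_space UNIV) (Q i)) (A i) = measure (distr M (count_space UNIV) (Q 0)) (A i)"
        by (simp add: ident[of i])
      then show "prob (Q i -` A i \<inter> space M) = prob (Q 0 -` A i \<inter> space M)"
        by (simp add: measure_distr[OF meas])
    qed
    also have "\<dots> = (\<Prod>t\<in>{0..<N}. prob (Q 0 -` A (t+b) \<inter> space M))"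
      using prod.shift_bounds_nat_ivl[of "\<lambda>i. prob (Q 0 -` A i \<inter> space M)" 0 b N] by (simp add: add.commute)
    also have "\<dots> = (\<Prod>t<N. prob (Q 0 -` {p. fst p = L!t} \<inter> space M))"
      by (simp add: A_def atLeast0LessThan)
    finally show ?thesis using True eqset by (simp add: emeasure_eq_measure)
  qed
qed

lemma (in prob_space) block_distr_eq:
  fixes Q :: "nat \<Rightarrow> 'a \<Rightarrow> nat \<times> nat"
  assumes meas: "\<And>i. Q i \<in> M \<rightarrow>\<^sub>M count_space UNIV"
    and indep: "indep_vars (\<lambda>_. count_space UNIV) Q UNIV"
    and ident: "\<And>i. distr M (count_space UNIV) (Q i) = distr M (count_space UNIV) (Q 0)"
  shows "distr M (count_space UNIV) (\<lambda>\<omega>. map (\<lambda>t. fst (Q (b+t) \<omega>)) [0..<N]) =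
         distr M (count_space UNIV) (\<lambda>\<omega>. map (\<lambda>t. fst (Q (0+t) \<omega>)) [0..<N])"
proof (rule measure_eqI_countable)
  have mm: "(\<lambda>\<omega>. map (\<lambda>t. fst (Q (c+t) \<omega>)) [0..<N]) \<in> measurable M (count_space UNIV)" for c
    by (rule measurable_map_list) (use measurable_compose[OF meas, of fst "count_space UNIV"] in auto)
  fix L :: "nat list"
  show "emeasure (distr M (count_space UNIV) (\<lambda>\<omega>. map (\<lambda>t. fst (Q (b+t) \<omega>)) [0..<N])) {L} =
        emeasure (distr M (count_space UNIV) (\<lambda>\<omega>. map (\<lambda>t. fst (Q (0+t) \<omega>)) [0..<N])) {L}"
    by (simp only: emeasure_distr[OF mm] sets_count_space Pow_UNIV UNIV_I
        block_preimage_emeasure[OF meas indep ident])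
qed auto



theorem theorem4p2:
  fixes M :: "'a measure" and m :: nat and X0 Y0 :: "nat \<Rightarrow> 'a \<Rightarrow> nat"
    and \<eta> r :: real and n k l :: nat
  assumes m: "m \<ge> 2"
    and prob: "prob_space M"
    and meas: "\<And>i. (\<lambda>\<omega>. (X0 i \<omega>, Y0 i \<omega>)) \<in> M \<rightarrow>\<^sub>M count_space UNIV"
    and indep: "prob_space.indep_vars M (\<lambda>_. count_space UNIV) (\<lambda>i \<omega>. (X0 i \<omega>, Y0 i \<omega>)) UNIV"
    and ident: "\<And>i. distr M (count_space UNIV) (\<lambda>\<omega>. (X0 i \<omega>, Y0 i \<omega>))
                     = distr M (count_space UNIV) (\<lambda>\<omega>. (X0 0 \<omega>, Y0 0 \<omega>))"
    and marg: "\<And>j::nat. j \<ge> 1 \<Longrightarrow>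
                 measure M {\<omega>\<in>space M. X0 0 \<omega> = j} \<ge> measure M {\<omega>\<in>space M. Y0 0 \<omega> = j}"
    and Y0pos: "measure M {\<omega>\<in>space M. Y0 0 \<omega> = 0} > 0"
    and coup_ge: "AE \<omega> in M. X0 0 \<omega> \<ge> Y0 0 \<omega>"
    and coup_eq: "AE \<omega> in M. Y0 0 \<omega> > 0 \<longrightarrow> X0 0 \<omega> = Y0 0 \<omega>"
    and eta: "\<eta> > 0"
    and finE: "integrable M (\<lambda>\<omega>. real (X0 0 \<omega>))"
    and Ediff: "prob_space.expectation M (\<lambda>\<omega>. real (X0 0 \<omega>) - real (Y0 0 \<omega>))
                  \<ge> \<eta> * measure M {\<omega>\<in>space M. Y0 0 \<omega> = 0}"
    and r: "r \<ge> 0"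
    and l: "real l \<le> r * \<eta> / 2"
  shows "(\<integral>\<^sup>+ \<omega>. ennreal (real (tval m (\<lambda>i. X0 i \<omega>) (n + k + l) 0)) \<partial>M)
         \<ge> ennreal (real m ^ (k + l) * \<eta> / 2) *
           (\<integral>\<^sup>+ \<omega>. ennreal (real (Npaths0 m (\<lambda>i. Y0 i \<omega>) n 0)
                      * indicator {\<omega>. real (Npaths0 m (\<lambda>i. Y0 i \<omega>) n 0) \<ge> r} \<omega>
                      * indicator {\<omega>. tval m (\<lambda>i. Y0 i \<omega>) n 0 = k} \<omega>) \<partial>M)"
proof -
  interpret P: prob_space M by (rule prob)
  have m0: "m > 0" using m by simp
  define Q where "Q = (\<lambda>i \<omega>. (X0 i \<omega>, Y0 i \<omega>))"
  have Qm: "\<And>i. Q i \<in> M \<rightarrow>\<^sub>M count_space UNIV" using meas by (simp add: Q_def)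
  have indepQ: "P.indep_vars (\<lambda>_. count_space UNIV) Q UNIV" using indep by (simp add: Q_def)
  have identQ: "\<And>i. distr M (count_space UNIV) (Q i) = distr M (count_space UNIV) (Q 0)"
    using ident by (simp add: Q_def)
  have Xm: "\<And>i. (\<lambda>\<omega>. X0 i \<omega>) \<in> M \<rightarrow>\<^sub>M count_space UNIV"
    using measurable_compose[OF Qm, of fst "count_space UNIV"] by (simp add: Q_def)
  have Ym: "\<And>i. (\<lambda>\<omega>. Y0 i \<omega>) \<in> M \<rightarrow>\<^sub>M count_space UNIV"
    using measurable_compose[OF Qm, of snd "count_space UNIV"] by (simp add: Q_def)
  have measK: "\<And>(G :: (nat\<times>nat) list \<Rightarrow> ennreal) K. (\<lambda>\<omega>. G (map (\<lambda>t. Q t \<omega>) [0..<K])) \<in> borel_measurable M"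
  proof -
    fix G :: "(nat\<times>nat) list \<Rightarrow> ennreal" and K
    have "(\<lambda>\<omega>. map (\<lambda>t. Q t \<omega>) [0..<K]) \<in> measurable M (count_space UNIV)"
      by (rule measurable_map_list) (use Qm in auto)
    from measurable_compose[OF this, of G borel] show "(\<lambda>\<omega>. G (map (\<lambda>t. Q t \<omega>) [0..<K])) \<in> borel_measurable M"
      by simp
  qed
  have measH: "\<And>(H :: (nat \<Rightarrow> nat) \<Rightarrow> (nat \<Rightarrow> nat) \<Rightarrow> ennreal) K.
      (\<And>x y x' y'. (\<And>t. t<K \<Longrightarrow> x t = x' t) \<Longrightarrow> (\<And>t. t<K \<Longrightarrow> y t = y' t) \<Longrightarrow> H x y = H x' y') \<Longrightarrow>
      (\<lambda>\<omega>. H (\<lambda>i. X0 i \<omega>) (\<lambda>i. Y0 i \<omega>)) \<in> borel_measurable M"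
  proof -
    fix H :: "(nat \<Rightarrow> nat) \<Rightarrow> (nat \<Rightarrow> nat) \<Rightarrow> ennreal" and K
    assume hc: "\<And>x y x' y'. (\<And>t. t<K \<Longrightarrow> x t = x' t) \<Longrightarrow> (\<And>t. t<K \<Longrightarrow> y t = y' t) \<Longrightarrow> H x y = H x' y'"
    define G where "G L = H (\<lambda>t. if t<K then fst (L!t) else 0) (\<lambda>t. if t < K then snd (L!t) else 0)" for L
    have eq: "(\<lambda>\<omega>. H (\<lambda>i. X0 i \<omega>) (\<lambda>i. Y0 i \<omega>)) = (\<lambda>\<omega>. G (map (\<lambda>t. Q t \<omega>) [0..<K]))"
      unfolding G_def by (rule ext, rule hc) (simp_all add: Q_def)
    show "(\<lambda>\<omega>. H (\<lambda>i. X0 i \<omega>) (\<lambda>i. Y0 i \<omega>)) \<in> borel_measurable M" unfolding eq by (rule measK)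
  qed
  have AEtr: "\<And>i (Pr :: nat\<times>nat \<Rightarrow> bool). (AE \<omega> in M. Pr (Q 0 \<omega>)) \<Longrightarrow> (AE \<omega> in M. Pr (Q i \<omega>))"
  proof -
    fix i and Pr :: "nat\<times>nat \<Rightarrow> bool" assume a: "AE \<omega> in M. Pr (Q 0 \<omega>)"
    have "AE p in distr M (count_space UNIV) (Q 0). Pr p" using a by (subst AE_distr_iff[OF Qm]) simp_all
    then have "AE p in distr M (count_space UNIV) (Q i). Pr p" by (subst identQ[of i])
    then show "AE \<omega> in M. Pr (Q i \<omega>)" by (subst (asm) AE_distr_iff[OF Qm]) simp_all
  qed
  have NNtr: "\<And>i (g :: nat\<times>nat \<Rightarrow> ennreal). (\<integral>\<^sup>+\<omega>. g (Q i \<omega>) \<partial>M) = (\<integral>\<^sup>+\<omega>. g (Q 0 \<omega>) \<partial>M)"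
  proof -
    fix i and g :: "nat\<times>nat \<Rightarrow> ennreal"
    have "(\<integral>\<^sup>+\<omega>. g (Q i \<omega>) \<partial>M) = (\<integral>\<^sup>+p. g p \<partial>distr M (count_space UNIV) (Q i))"
      by (rule nn_integral_distr[OF Qm, symmetric]) simp
    also have "\<dots> = (\<integral>\<^sup>+p. g p \<partial>distr M (count_space UNIV) (Q 0))" by (subst identQ[of i]) (rule refl)
    also have "\<dots> = (\<integral>\<^sup>+\<omega>. g (Q 0 \<omega>) \<partial>M)"
      by (rule nn_integral_distr[OF Qm]) simp
    finally show "(\<integral>\<^sup>+\<omega>. g (Q i \<omega>) \<partial>M) = (\<integral>\<^sup>+\<omega>. g (Q 0 \<omega>) \<partial>M)" .
  qed
  have AEall: "AE \<omega> in M. \<forall>i. Y0 i \<omega> \<le> X0 i \<omega>"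
  proof (subst AE_all_countable, rule allI)
    fix i
    have "AE \<omega> in M. snd (Q 0 \<omega>) \<le> fst (Q 0 \<omega>)" using coup_ge by (simp add: Q_def)
    from AEtr[OF this, of i] show "AE \<omega> in M. Y0 i \<omega> \<le> X0 i \<omega>" by (simp add: Q_def)
  qed
  have Ubound: "\<And>c. (\<integral>\<^sup>+\<omega>. of_nat (X0 c \<omega>) * (if Y0 c \<omega> = 0 then 1 else 0) \<partial>M)
       \<ge> ennreal \<eta> * (\<integral>\<^sup>+\<omega>. (if Y0 c \<omega> = 0 then 1 else 0) \<partial>M)"
  proof -
    fix c
    define S0 where "S0 = {\<omega>\<in>space M. Y0 0 \<omega> = 0}"
    have S0s: "S0 \<in> sets M" unfolding S0_def
      using measurable_sets[OF Ym[of 0], of "{0}"] by (simp add: vimage_def Int_def conj_commute)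
    have e1: "(\<integral>\<^sup>+\<omega>. (if Y0 c \<omega> = 0 then 1 else 0) \<partial>M) = (\<integral>\<^sup>+\<omega>. (if Y0 0 \<omega> = 0 then 1 else 0) \<partial>M)"
      using NNtr[of "\<lambda>p. if snd p = 0 then 1 else 0" c] by (simp add: Q_def)
    have e2: "(\<integral>\<^sup>+\<omega>. of_nat (X0 c \<omega>) * (if Y0 c \<omega> = 0 then 1 else 0) \<partial>M) =
              (\<integral>\<^sup>+\<omega>. of_nat (X0 0 \<omega>) * (if Y0 0 \<omega> = 0 then 1 else 0) \<partial>M)"
      using NNtr[of "\<lambda>p. of_nat (fst p) * (if snd p = 0 then 1 else 0)" c] by (simp add: Q_def)
    have e3: "(\<integral>\<^sup>+\<omega>. (if Y0 0 \<omega> = 0 then 1 else 0) \<partial>M) = ennreal (measure M S0)"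
    proof -
      have "(\<integral>\<^sup>+\<omega>. (if Y0 0 \<omega> = 0 then 1 else 0) \<partial>M) = (\<integral>\<^sup>+\<omega>. indicator S0 \<omega> \<partial>M)"
        by (rule nn_integral_cong) (simp add: S0_def indicator_def)
      also have "\<dots> = emeasure M S0" using S0s by simp
      finally show ?thesis by (simp add: P.emeasure_eq_measure)
    qed
    define f where "f \<omega> = real (X0 0 \<omega>) * (if Y0 0 \<omega> = 0 then 1 else 0)" for \<omega>
    have fm: "f \<in> borel_measurable M"
    proof -
      have "(\<lambda>\<omega>. (\<lambda>p. real (fst p) * (if snd p = 0 then 1 else 0)) (Q 0 \<omega>)) \<in> borel_measurable M"
        by (rule measurable_compose[OF Qm]) simp
      then show ?thesis unfolding f_def[abs_def] by (simp add: Q_def)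
    qed
    have fint: "integrable M f"
      by (rule Bochner_Integration.integrable_bound[OF finE fm]) (simp add: f_def)
    have e4: "P.expectation (\<lambda>\<omega>. real (X0 0 \<omega>) - real (Y0 0 \<omega>)) = integral\<^sup>L M f"
    proof (rule integral_cong_AE)
      have "(\<lambda>\<omega>. (\<lambda>p. real (fst p) - real (snd p)) (Q 0 \<omega>)) \<in> borel_measurable M"
        by (rule measurable_compose[OF Qm]) simp
      then show "(\<lambda>\<omega>. real (X0 0 \<omega>) - real (Y0 0 \<omega>)) \<in> borel_measurable M" by (simp add: Q_def)
      show "f \<in> borel_measurable M" by (rule fm)
      show "AE \<omega> in M. real (X0 0 \<omega>) - real (Y0 0 \<omega>) = f \<omega>"
        using coup_eq by eventually_elim (auto simp: f_def)
    qed
    have e5: "(\<integral>\<^sup>+\<omega>. of_nat (X0 0 \<omega>) * (if Y0 0 \<omega> = 0 then 1 else 0) \<partial>M) = ennreal (integral\<^sup>L M f)"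
    proof -
      have "(\<integral>\<^sup>+\<omega>. of_nat (X0 0 \<omega>) * (if Y0 0 \<omega> = 0 then 1 else 0) \<partial>M) = (\<integral>\<^sup>+\<omega>. ennreal (f \<omega>) \<partial>M)"
        by (rule nn_integral_cong) (simp add: f_def ennreal_of_nat_eq_real_of_nat)
      also have "\<dots> = ennreal (integral\<^sup>L M f)"
        by (rule nn_integral_eq_integral[OF fint]) (simp add: f_def)
      finally show ?thesis .
    qed
    have "ennreal \<eta> * ennreal (measure M S0) = ennreal (\<eta> * measure M S0)"
      using eta by (simp add: ennreal_mult)
    also have "\<dots> \<le> ennreal (integral\<^sup>L M f)"
      using Ediff e4 by (simp add: S0_def ennreal_leI)
    finally show "(\<integral>\<^sup>+\<omega>. of_nat (X0 c \<omega>) * (if Y0 c \<omega> = 0 then 1 else 0) \<partial>M)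
       \<ge> ennreal \<eta> * (\<integral>\<^sup>+\<omega>. (if Y0 c \<omega> = 0 then 1 else 0) \<partial>M)"
      using e1 e2 e3 e5 by simp
  qed
  define j where "j = k + l"
  define NN where "NN = m ^ n"
  define Aev where "Aev \<omega> \<longleftrightarrow> r \<le> real (Npaths0 m (\<lambda>i. Y0 i \<omega>) n 0) \<and> tval m (\<lambda>i. Y0 i \<omega>) n 0 = k" for \<omega>
  define IA where "IA \<omega> = (if Aev \<omega> then 1 else 0 :: ennreal)" for \<omega>
  define S where "S \<omega> = Sfun m (\<lambda>i. X0 i \<omega>) (\<lambda>i. Y0 i \<omega>) n 0" for \<omega>
  define Nn where "Nn \<omega> = Npaths0 m (\<lambda>i. Y0 i \<omega>) n 0" for \<omega>
  have step1: "(\<Sum>b<m^j. \<integral>\<^sup>+\<omega>. of_nat (tval m (\<lambda>i. X0 i \<omega>) n b - j) \<partial>M)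
      \<le> (\<integral>\<^sup>+\<omega>. of_nat (tval m (\<lambda>i. X0 i \<omega>) (n+j) 0) \<partial>M)"
  proof -
    have mb: "(\<lambda>\<omega>. of_nat (tval m (\<lambda>i. X0 i \<omega>) n b - j) :: ennreal) \<in> borel_measurable M" for b
    proof (rule measH[of "(b+1)*m^n" "\<lambda>x y. of_nat (tval m x n b - j)"])
      fix x y x' y' :: "nat \<Rightarrow> nat"
      assume "\<And>t. t < (b+1)*m^n \<Longrightarrow> x t = x' t"
      then have "tval m x n b = tval m x' n b" by (intro tval_cong) auto
      then show "(of_nat (tval m x n b - j) :: ennreal) = of_nat (tval m x' n b - j)" by simp
    qed
    have "(\<Sum>b<m^j. \<integral>\<^sup>+\<omega>. of_nat (tval m (\<lambda>i. X0 i \<omega>) n b - j) \<partial>M)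
        = (\<integral>\<^sup>+\<omega>. (\<Sum>b<m^j. of_nat (tval m (\<lambda>i. X0 i \<omega>) n b - j)) \<partial>M)"
      by (rule nn_integral_sum[symmetric]) (use mb in auto)
    also have "\<dots> \<le> (\<integral>\<^sup>+\<omega>. of_nat (tval m (\<lambda>i. X0 i \<omega>) (n+j) 0) \<partial>M)"
    proof (rule nn_integral_mono)
      fix \<omega>
      have "(\<Sum>b<m^j. tval m (\<lambda>i. X0 i \<omega>) n (0*m^j+b) - j) \<le> tval m (\<lambda>i. X0 i \<omega>) (n+j) 0"
        by (rule tval_ancestors)
      then show "(\<Sum>b<m^j. of_nat (tval m (\<lambda>i. X0 i \<omega>) n b - j) :: ennreal) \<le> of_nat (tval m (\<lambda>i. X0 i \<omega>) (n+j) 0)"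
        by (simp flip: of_nat_sum)
    qed
    finally show ?thesis .
  qed
  have step2: "(\<integral>\<^sup>+\<omega>. of_nat (tval m (\<lambda>i. X0 i \<omega>) n b - j) \<partial>M)
      = (\<integral>\<^sup>+\<omega>. of_nat (tval m (\<lambda>i. X0 i \<omega>) n 0 - j) \<partial>M)" for b
  proof -
    define F where "F L = (of_nat (tval m (\<lambda>t. if t < NN then L!t else 0) n 0 - j) :: ennreal)" for L :: "nat list"
    define LX where "LX c \<omega> = map (\<lambda>t. fst (Q (c+t) \<omega>)) [0..<NN]" for c \<omega>
    have mLX: "LX c \<in> measurable M (count_space UNIV)" for c
      unfolding LX_def[abs_def]
      by (rule measurable_map_list) (use measurable_compose[OF Qm, of fst "count_space UNIV"] in auto)
    have h: "of_nat (tval m (\<lambda>i. X0 i \<omega>) n c - j) = F (LX (c*NN) \<omega>)" for c \<omega>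
    proof -
      have "tval m (\<lambda>i. X0 i \<omega>) n c = tval m (\<lambda>t. X0 (c*m^n + t) \<omega>) n 0"
        using tval_shift[of m "\<lambda>i. X0 i \<omega>" c n 0] by simp
      also have "\<dots> = tval m (\<lambda>t. if t < NN then LX (c*NN) \<omega> ! t else 0) n 0"
        by (rule tval0_cong) (simp add: LX_def Q_def NN_def)
      finally show ?thesis by (simp add: F_def)
    qed
    have "(\<integral>\<^sup>+\<omega>. F (LX c \<omega>) \<partial>M) = (\<integral>\<^sup>+L. F L \<partial>distr M (count_space UNIV) (LX c))" for c
      by (rule nn_integral_distr[OF mLX, symmetric]) simp
    moreover have "distr M (count_space UNIV) (LX (b*NN)) = distr M (count_space UNIV) (LX 0)"
      unfolding LX_def[abs_def] using P.block_distr_eq[OF Qm indepQ identQ, of "b*NN" NN] by simp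
    ultimately have "(\<integral>\<^sup>+\<omega>. F (LX (b*NN) \<omega>) \<partial>M) = (\<integral>\<^sup>+\<omega>. F (LX (0*NN) \<omega>) \<partial>M)" by simp
    then show ?thesis by (simp only: h)
  qed
  have step3: "(\<integral>\<^sup>+\<omega>. of_nat (S \<omega> - l) * IA \<omega> \<partial>M) \<le> (\<integral>\<^sup>+\<omega>. of_nat (tval m (\<lambda>i. X0 i \<omega>) n 0 - j) \<partial>M)"
  proof (rule nn_integral_mono_AE)
    show "AE \<omega> in M. of_nat (S \<omega> - l) * IA \<omega> \<le> (of_nat (tval m (\<lambda>i. X0 i \<omega>) n 0 - j) :: ennreal)"
      using AEall
    proof eventually_elim
      case (elim \<omega>)
      have "tval m (\<lambda>i. X0 i \<omega>) n 0 \<ge> tval m (\<lambda>i. Y0 i \<omega>) n 0 + S \<omega>"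
        unfolding S_def by (rule tval_XY) (use elim m0 in auto)
      then show ?case by (auto simp: IA_def Aev_def j_def)
    qed
  qed
  have step4: "ennreal \<eta> * (\<integral>\<^sup>+\<omega>. of_nat (Nn \<omega>) * IA \<omega> \<partial>M) \<le> (\<integral>\<^sup>+\<omega>. of_nat (S \<omega>) * IA \<omega> \<partial>M)"
  proof -
    define T where "T c \<omega> = (of_nat (if Y0 c \<omega> = 0 \<and> path_open m (\<lambda>i. Y0 i \<omega>) n c then X0 c \<omega> else 0) :: ennreal) * IA \<omega>" for c \<omega>
    define T1 where "T1 c \<omega> = (if Y0 c \<omega> = 0 \<and> path_open m (\<lambda>i. Y0 i \<omega>) n c then 1 else 0 :: ennreal) * IA \<omega>" for c \<omega>
    have sumS: "of_nat (S \<omega>) * IA \<omega> = (\<Sum>c<NN. T c \<omega>)" for \<omega>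
      by (simp add: S_def Sfun0 T_def NN_def sum_distrib_right)
    have sumN: "of_nat (Nn \<omega>) * IA \<omega> = (\<Sum>c<NN. T1 c \<omega>)" for \<omega>
      unfolding Nn_def Npaths0_sum T1_def NN_def sum_distrib_right of_nat_sum
      by (intro sum.cong refl) simp
    have agreeH: "\<And>x x' :: nat \<Rightarrow> nat. (\<And>t. t < NN \<Longrightarrow> x t = x' t) \<Longrightarrow>
        path_open m x n c = path_open m x' n c \<and> Npaths0 m x n 0 = Npaths0 m x' n 0 \<and> tval m x n 0 = tval m x' n 0"
      if c: "c < NN" for c
      using path_open_cong[OF m0, of n _ _ c] Npaths0_cong[OF m0] tval0_cong c unfolding NN_def by metis
    have Tm: "T c \<in> borel_measurable M" if c: "c < NN" for c
    proof -
      have "T c = (\<lambda>\<omega>. (\<lambda>x y. (of_nat (if y c = 0 \<and> path_open m y n c then x c else 0) :: ennreal) *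
          (if r \<le> real (Npaths0 m y n 0) \<and> tval m y n 0 = k then 1 else 0)) (\<lambda>i. X0 i \<omega>) (\<lambda>i. Y0 i \<omega>))"
        by (rule ext) (simp add: T_def IA_def Aev_def)
      also have "\<dots> \<in> borel_measurable M"
      proof (rule measH[of NN])
        fix x y x' y' :: "nat \<Rightarrow> nat"
        assume hx: "\<And>t. t < NN \<Longrightarrow> x t = x' t" and hy: "\<And>t. t < NN \<Longrightarrow> y t = y' t"
        show "(of_nat (if y c = 0 \<and> path_open m y n c then x c else 0) :: ennreal) *
          (if r \<le> real (Npaths0 m y n 0) \<and> tval m y n 0 = k then 1 else 0) =
          (of_nat (if y' c = 0 \<and> path_open m y' n c then x' c else 0) :: ennreal) *
          (if r \<le> real (Npaths0 m y' n 0) \<and> tval m y' n 0 = k then 1 else 0)"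
          using agreeH[OF c hy] hx[OF c] hy[OF c] by simp
      qed
      finally show ?thesis .
    qed
    have T1m: "T1 c \<in> borel_measurable M" if c: "c < NN" for c
    proof -
      have "T1 c = (\<lambda>\<omega>. (\<lambda>x y. (if y c = 0 \<and> path_open m y n c then 1 else 0 :: ennreal) *
          (if r \<le> real (Npaths0 m y n 0) \<and> tval m y n 0 = k then 1 else 0)) (\<lambda>i. X0 i \<omega>) (\<lambda>i. Y0 i \<omega>))"
        by (rule ext) (simp add: T1_def IA_def Aev_def)
      also have "\<dots> \<in> borel_measurable M"
      proof (rule measH[of NN])
        fix x y x' y' :: "nat \<Rightarrow> nat"
        assume hy: "\<And>t. t < NN \<Longrightarrow> y t = y' t"
        show "(if y c = 0 \<and> path_open m y n c then 1 else 0 :: ennreal) *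
          (if r \<le> real (Npaths0 m y n 0) \<and> tval m y n 0 = k then 1 else 0) =
          (if y' c = 0 \<and> path_open m y' n c then 1 else 0 :: ennreal) *
          (if r \<le> real (Npaths0 m y' n 0) \<and> tval m y' n 0 = k then 1 else 0)"
          using agreeH[OF c hy] hy[OF c] by simp
      qed
      finally show ?thesis .
    qed
    have Tc: "ennreal \<eta> * integral\<^sup>N M (T1 c) \<le> integral\<^sup>N M (T c)" if c: "c < NN" for c
    proof -
      define B where "B = {0..<NN} - {c}"
      have iv: "P.indep_var (PiM {c} (\<lambda>_. count_space UNIV)) (\<lambda>\<omega>. restrict (\<lambda>i. Q i \<omega>) {c})
                  (PiM B (\<lambda>_. count_space UNIV)) (\<lambda>\<omega>. restrict (\<lambda>i. Q i \<omega>) B)"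
        by (rule P.indep_var_restrict[OF indepQ]) (auto simp: B_def)
      define Lv where "Lv f = map (\<lambda>t. if t \<in> B then snd (f t) else 0) [0..<NN]" for f :: "nat \<Rightarrow> nat \<times> nat"
      define G where "G L = (if path_open m (\<lambda>t. if t < NN then L ! t else 0) n c \<and>
          r \<le> real (Npaths0 m (\<lambda>t. if t < NN then L ! t else 0) n 0) \<and>
          tval m (\<lambda>t. if t < NN then L ! t else 0) n 0 = k then 1 else 0 :: ennreal)" for L
      define w where "w f = G (Lv f)" for f
      define u where "u f = of_nat (fst (f c)) * (if snd (f c) = 0 then 1 else 0 :: ennreal)" for f :: "nat \<Rightarrow> nat \<times> nat"
      define u0 where "u0 f = (if snd (f c) = 0 then 1 else 0 :: ennreal)" for f :: "nat \<Rightarrow> nat \<times> nat"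
      have wm: "w \<in> borel_measurable (PiM B (\<lambda>_. count_space UNIV))"
      proof -
        have "Lv \<in> measurable (PiM B (\<lambda>_. count_space UNIV)) (count_space UNIV)"
          unfolding Lv_def[abs_def]
        proof (rule measurable_map_list)
          fix t
          show "(\<lambda>f. if t \<in> B then snd (f t) else 0) \<in> measurable (PiM B (\<lambda>_. count_space UNIV)) (count_space UNIV)"
          proof (cases "t \<in> B")
            case True
            have "(\<lambda>f. f t) \<in> measurable (PiM B (\<lambda>_. count_space UNIV)) (count_space UNIV)"
              using measurable_component_singleton[OF True, of "\<lambda>_. count_space UNIV"] by simp
            from measurable_compose[OF this, of snd "count_space UNIV"] show ?thesis using True by simp
          qed simp
        qed
        from measurable_compose[OF this, of G borel] show ?thesis by (simp add: w_def[abs_def])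
      qed
      have cc: "(\<lambda>f. f c) \<in> measurable (PiM {c} (\<lambda>_. count_space UNIV)) (count_space UNIV)"
        using measurable_component_singleton[of c "{c}" "\<lambda>_. count_space UNIV"] by simp
      have um: "u \<in> borel_measurable (PiM {c} (\<lambda>_. count_space UNIV))"
        using measurable_compose[OF cc, of "\<lambda>p. of_nat (fst p) * (if snd p = 0 then 1 else 0 :: ennreal)" borel]
        by (simp add: u_def[abs_def])
      have u0m: "u0 \<in> borel_measurable (PiM {c} (\<lambda>_. count_space UNIV))"
        using measurable_compose[OF cc, of "\<lambda>p. (if snd p = 0 then 1 else 0 :: ennreal)" borel]
        by (simp add: u0_def[abs_def])
      have key: "w (restrict (\<lambda>i. Q i \<omega>) B) = (if path_open m (\<lambda>i. Y0 i \<omega>) n c \<and> Aev \<omega> then 1 else 0)"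
        if y0: "Y0 c \<omega> = 0" for \<omega>
      proof -
        have agree: "(\<lambda>t. if t < NN then Lv (restrict (\<lambda>i. Q i \<omega>) B) ! t else 0) t = Y0 t \<omega>" if t: "t < NN" for t
        proof (cases "t \<in> B")
          case True then show ?thesis using t by (simp add: Lv_def Q_def)
        next
          case False then have "t = c" using t by (simp add: B_def)
          then show ?thesis using t y0 False by (simp add: Lv_def)
        qed
        from agreeH[OF c agree] show ?thesis by (simp add: w_def G_def Aev_def)
      qed
      have Tw: "T c \<omega> = u (restrict (\<lambda>i. Q i \<omega>) {c}) * w (restrict (\<lambda>i. Q i \<omega>) B)" for \<omega>
      proof (cases "Y0 c \<omega> = 0")
        case True then show ?thesis using key[OF True] by (simp add: T_def u_def Q_def IA_def)
      next
        case False then show ?thesis by (simp add: T_def u_def Q_def)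
      qed
      have T1w: "T1 c \<omega> = u0 (restrict (\<lambda>i. Q i \<omega>) {c}) * w (restrict (\<lambda>i. Q i \<omega>) B)" for \<omega>
      proof (cases "Y0 c \<omega> = 0")
        case True then show ?thesis using key[OF True] by (simp add: T1_def u0_def Q_def IA_def)
      next
        case False then show ?thesis by (simp add: T1_def u0_def Q_def)
      qed
      have I1: "integral\<^sup>N M (T c) = (\<integral>\<^sup>+\<omega>. of_nat (X0 c \<omega>) * (if Y0 c \<omega> = 0 then 1 else 0) \<partial>M) *
                  (\<integral>\<^sup>+\<omega>. w (restrict (\<lambda>i. Q i \<omega>) B) \<partial>M)"
        unfolding Tw P.indep_factor[OF iv um wm] by (simp add: u_def Q_def)
      have I2: "integral\<^sup>N M (T1 c) = (\<integral>\<^sup>+\<omega>. (if Y0 c \<omega> = 0 then 1 else 0) \<partial>M) *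
                  (\<integral>\<^sup>+\<omega>. w (restrict (\<lambda>i. Q i \<omega>) B) \<partial>M)"
        unfolding T1w P.indep_factor[OF iv u0m wm] by (simp add: u0_def Q_def)
      show ?thesis unfolding I1 I2 mult.assoc[symmetric]
        by (rule mult_right_mono[OF Ubound]) simp
    qed
    have "ennreal \<eta> * (\<integral>\<^sup>+\<omega>. of_nat (Nn \<omega>) * IA \<omega> \<partial>M) = ennreal \<eta> * (\<Sum>c<NN. integral\<^sup>N M (T1 c))"
      unfolding sumN by (subst nn_integral_sum) (auto intro: T1m)
    also have "\<dots> = (\<Sum>c<NN. ennreal \<eta> * integral\<^sup>N M (T1 c))" by (rule sum_distrib_left)
    also have "\<dots> \<le> (\<Sum>c<NN. integral\<^sup>N M (T c))" by (rule sum_mono) (use Tc in auto)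
    also have "\<dots> = (\<integral>\<^sup>+\<omega>. of_nat (S \<omega>) * IA \<omega> \<partial>M)"
      unfolding sumS by (subst nn_integral_sum) (auto intro: Tm)
    finally show ?thesis .
  qed
  have agree0: "\<And>x x' :: nat \<Rightarrow> nat. (\<And>t. t < NN \<Longrightarrow> x t = x' t) \<Longrightarrow>
        Npaths0 m x n 0 = Npaths0 m x' n 0 \<and> tval m x n 0 = tval m x' n 0"
    using Npaths0_cong[OF m0] tval0_cong unfolding NN_def by metis
  have IAm: "(\<lambda>\<omega>. of_nat (f (Nn \<omega>)) * IA \<omega> :: ennreal) \<in> borel_measurable M" for f :: "nat \<Rightarrow> nat"
  proof -
    have "(\<lambda>\<omega>. of_nat (f (Nn \<omega>)) * IA \<omega> :: ennreal) = (\<lambda>\<omega>. (\<lambda>x y. of_nat (f (Npaths0 m y n 0)) *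
          (if r \<le> real (Npaths0 m y n 0) \<and> tval m y n 0 = k then 1 else 0 :: ennreal)) (\<lambda>i. X0 i \<omega>) (\<lambda>i. Y0 i \<omega>))"
      by (rule ext) (simp add: Nn_def IA_def Aev_def)
    also have "\<dots> \<in> borel_measurable M"
    proof (rule measH[of NN])
      fix x y x' y' :: "nat \<Rightarrow> nat"
      assume hy: "\<And>t. t < NN \<Longrightarrow> y t = y' t"
      show "of_nat (f (Npaths0 m y n 0)) * (if r \<le> real (Npaths0 m y n 0) \<and> tval m y n 0 = k then 1 else 0 :: ennreal) =
            of_nat (f (Npaths0 m y' n 0)) * (if r \<le> real (Npaths0 m y' n 0) \<and> tval m y' n 0 = k then 1 else 0 :: ennreal)"
        using agree0[OF hy] by simp
    qed
    finally show ?thesis .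
  qed
  have Sm: "(\<lambda>\<omega>. of_nat (S \<omega> - l) * IA \<omega> :: ennreal) \<in> borel_measurable M"
  proof -
    have "(\<lambda>\<omega>. of_nat (S \<omega> - l) * IA \<omega> :: ennreal) = (\<lambda>\<omega>. (\<lambda>x y. of_nat (Sfun m x y n 0 - l) *
          (if r \<le> real (Npaths0 m y n 0) \<and> tval m y n 0 = k then 1 else 0 :: ennreal)) (\<lambda>i. X0 i \<omega>) (\<lambda>i. Y0 i \<omega>))"
      by (rule ext) (simp add: S_def IA_def Aev_def)
    also have "\<dots> \<in> borel_measurable M"
    proof (rule measH[of NN])
      fix x y x' y' :: "nat \<Rightarrow> nat"
      assume hx: "\<And>t. t < NN \<Longrightarrow> x t = x' t" and hy: "\<And>t. t < NN \<Longrightarrow> y t = y' t"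
      have "Sfun m x y n 0 = Sfun m x' y' n 0" by (rule Sfun0_cong[OF m0]) (use hx hy in \<open>auto simp: NN_def\<close>)
      then show "of_nat (Sfun m x y n 0 - l) * (if r \<le> real (Npaths0 m y n 0) \<and> tval m y n 0 = k then 1 else 0 :: ennreal) =
            of_nat (Sfun m x' y' n 0 - l) * (if r \<le> real (Npaths0 m y' n 0) \<and> tval m y' n 0 = k then 1 else 0 :: ennreal)"
        using agree0[OF hy] by simp
    qed
    finally show ?thesis .
  qed
  define E' where "E' = (\<integral>\<^sup>+\<omega>. of_nat (Nn \<omega>) * IA \<omega> \<partial>M)"
  define I where "I = (\<integral>\<^sup>+\<omega>. of_nat (S \<omega> - l) * IA \<omega> \<partial>M)"
  have E'fin: "E' \<le> of_nat NN"
  proof -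
    have "E' \<le> (\<integral>\<^sup>+\<omega>. of_nat NN \<partial>M)" unfolding E'_def
    proof (rule nn_integral_mono)
      fix \<omega>
      have "Nn \<omega> \<le> (\<Sum>c<NN. 1)" unfolding Nn_def Npaths0_sum NN_def by (rule sum_mono) simp
      then have "Nn \<omega> \<le> NN" by simp
      then show "of_nat (Nn \<omega>) * IA \<omega> \<le> of_nat NN" by (simp add: IA_def)
    qed
    also have "\<dots> = of_nat NN" by (simp add: P.emeasure_space_1)
    finally show ?thesis .
  qed
  have step5: "ennreal (\<eta>/2) * E' \<le> I"
  proof -
    have a: "(\<integral>\<^sup>+\<omega>. of_nat (S \<omega>) * IA \<omega> \<partial>M) \<le> I + (\<integral>\<^sup>+\<omega>. of_nat l * IA \<omega> \<partial>M)"
    proof -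
      have "(\<integral>\<^sup>+\<omega>. of_nat (S \<omega>) * IA \<omega> \<partial>M) \<le> (\<integral>\<^sup>+\<omega>. of_nat (S \<omega> - l) * IA \<omega> + of_nat l * IA \<omega> \<partial>M)"
      proof (rule nn_integral_mono)
        fix \<omega>
        have "(of_nat (S \<omega>) :: ennreal) \<le> of_nat (S \<omega> - l) + of_nat l"
          by (simp flip: of_nat_add)
        then show "of_nat (S \<omega>) * IA \<omega> \<le> of_nat (S \<omega> - l) * IA \<omega> + of_nat l * IA \<omega>"
          by (simp add: IA_def)
      qed
      also have "\<dots> = I + (\<integral>\<^sup>+\<omega>. of_nat l * IA \<omega> \<partial>M)"
        unfolding I_def by (rule nn_integral_add[OF Sm IAm[of "\<lambda>_. l"]])
      finally show ?thesis .
    qed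
    have b: "(\<integral>\<^sup>+\<omega>. of_nat l * IA \<omega> \<partial>M) \<le> ennreal (\<eta>/2) * E'"
    proof -
      have "(\<integral>\<^sup>+\<omega>. of_nat l * IA \<omega> \<partial>M) \<le> (\<integral>\<^sup>+\<omega>. ennreal (\<eta>/2) * (of_nat (Nn \<omega>) * IA \<omega>) \<partial>M)"
      proof (rule nn_integral_mono)
        fix \<omega>
        show "of_nat l * IA \<omega> \<le> ennreal (\<eta>/2) * (of_nat (Nn \<omega>) * IA \<omega>)"
        proof (cases "Aev \<omega>")
          case True
          then have "r \<le> real (Nn \<omega>)" by (simp add: Aev_def Nn_def)
          then have "r * \<eta> / 2 \<le> real (Nn \<omega>) * \<eta> / 2" using eta by (simp add: divide_right_mono)
          then have "real l \<le> \<eta> / 2 * real (Nn \<omega>)" using l by (simp add: algebra_simps)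
          then have "ennreal (real l) \<le> ennreal (\<eta> / 2 * real (Nn \<omega>))" by (rule ennreal_leI)
          moreover have "ennreal (\<eta> / 2 * real (Nn \<omega>)) = ennreal (\<eta>/2) * ennreal (real (Nn \<omega>))"
            by (rule ennreal_mult) (use eta in auto)
          ultimately show ?thesis using True
            by (simp add: IA_def ennreal_of_nat_eq_real_of_nat)
        next
          case False then show ?thesis by (simp add: IA_def)
        qed
      qed
      also have "\<dots> = ennreal (\<eta>/2) * E'"
        unfolding E'_def by (rule nn_integral_cmult[OF IAm[of "\<lambda>x. x"]])
      finally show ?thesis .
    qed
    have c: "ennreal \<eta> * E' \<le> I + ennreal (\<eta>/2) * E'"
      using step4 a b unfolding E'_def[symmetric] by (meson add_left_mono order_trans)
    obtain e where e: "E' = ennreal e" "e \<ge> 0"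
      using E'fin by (cases E' rule: ennreal_cases) (auto simp: ennreal_of_nat_eq_real_of_nat top_unique)
    show ?thesis
    proof (cases I rule: ennreal_cases)
      case (real i)
      have p1: "ennreal \<eta> * ennreal e = ennreal (\<eta>*e)" by (rule ennreal_mult[symmetric]) (use eta e in auto)
      have p2: "ennreal (\<eta>/2) * ennreal e = ennreal (\<eta>/2*e)" by (rule ennreal_mult[symmetric]) (use eta e in auto)
      have p3: "ennreal i + ennreal (\<eta>/2*e) = ennreal (i + \<eta>/2*e)" by (rule ennreal_plus[symmetric]) (use eta e real in auto)
      have "ennreal (\<eta> * e) \<le> ennreal (i + \<eta>/2 * e)"
        using c unfolding e(1) real p1 p2 p3 .
      then have "\<eta> * e \<le> i + \<eta>/2 * e"
        using real e eta by (subst (asm) ennreal_le_iff) auto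
      then have "\<eta>/2 * e \<le> i" by simp
      then have "ennreal (\<eta>/2 * e) \<le> ennreal i" by (rule ennreal_leI)
      then show ?thesis unfolding e(1) real p2 .
    next
      case top then show ?thesis by simp
    qed
  qed
  have lhs: "(\<integral>\<^sup>+\<omega>. ennreal (real (tval m (\<lambda>i. X0 i \<omega>) (n + k + l) 0)) \<partial>M)
      = (\<integral>\<^sup>+\<omega>. of_nat (tval m (\<lambda>i. X0 i \<omega>) (n+j) 0) \<partial>M)"
    by (simp add: j_def add.assoc ennreal_of_nat_eq_real_of_nat)
  have rhs: "(\<integral>\<^sup>+ \<omega>. ennreal (real (Npaths0 m (\<lambda>i. Y0 i \<omega>) n 0)
                      * indicator {\<omega>. real (Npaths0 m (\<lambda>i. Y0 i \<omega>) n 0) \<ge> r} \<omega>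
                      * indicator {\<omega>. tval m (\<lambda>i. Y0 i \<omega>) n 0 = k} \<omega>) \<partial>M) = E'"
    unfolding E'_def
    by (rule nn_integral_cong) (simp add: Nn_def IA_def Aev_def indicator_def ennreal_of_nat_eq_real_of_nat)
  have cst: "ennreal (real m ^ (k + l) * \<eta> / 2) = of_nat (m^j) * ennreal (\<eta>/2)"
  proof -
    have q1: "ennreal (real m ^ (k + l) * \<eta> / 2) = ennreal (real m ^ (k + l)) * ennreal (\<eta> / 2)"
      by (subst ennreal_mult[symmetric]) (use eta in auto)
    have q2: "(of_nat (m^j) :: ennreal) = ennreal (real m ^ (k + l))"
      unfolding j_def of_nat_power ennreal_of_nat_eq_real_of_nat[of m] by (rule ennreal_power) simp
    show ?thesis by (simp only: q1 q2)
  qed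
  have "ennreal (real m ^ (k + l) * \<eta> / 2) * E' = of_nat (m^j) * (ennreal (\<eta>/2) * E')"
    by (simp add: cst mult.assoc)
  also have "\<dots> \<le> of_nat (m^j) * I" by (rule mult_left_mono[OF step5]) simp
  also have "\<dots> \<le> of_nat (m^j) * (\<integral>\<^sup>+\<omega>. of_nat (tval m (\<lambda>i. X0 i \<omega>) n 0 - j) \<partial>M)"
    by (rule mult_left_mono) (use step3 in \<open>simp_all add: I_def\<close>)
  also have "\<dots> = (\<Sum>b<m^j. \<integral>\<^sup>+\<omega>. of_nat (tval m (\<lambda>i. X0 i \<omega>) n 0 - j) \<partial>M)"
    by simp
  also have "\<dots> = (\<Sum>b<m^j. \<integral>\<^sup>+\<omega>. of_nat (tval m (\<lambda>i. X0 i \<omega>) n b - j) \<partial>M)"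
    by (rule sum.cong[OF refl step2[symmetric]])
  also have "\<dots> \<le> (\<integral>\<^sup>+\<omega>. of_nat (tval m (\<lambda>i. X0 i \<omega>) (n+j) 0) \<partial>M)" by (rule step1)
  finally show ?thesis unfolding lhs rhs .
qed

end
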